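(* Let $G$ be a finite simple undirected bipartite graph and let $m$ be a nonnegative integer. Then $G$ does not contain more than $m$ pairwise vertex-disjoint $4k$-cycles if and only if, for every even $i\in\{0,2,4,\dots\}$ and every induced subgraph $G_i$ of $G$ on $i$ vertices, \[ \operatorname{per}(G_i)=(-1)^{i/2}\sum_{z=0}^{m}\frac{4^z}{z!}\sum_{T_z}\det(G_i\setminus T_z), \] where, for each $z$, the inner sum runs over all ordered tuples $T_z=(R_1,\dots,R_z)$ of $z$ mutually vertex-disjoint $4k$-cycles of $G_i$.
   Context: For a graph $H$ with vertex set $\{v_1,\dots,v_n\}$, the adjacency matrix $A(H)=(a_{ij})$ is the $n\times n$ matrix with $a_{ij}=1$ if $v_i$ and $v_j$ are adjacent and $0$ otherwise; $\det(H)$ and $\operatorname{per}(H)$ denote the determinant and the permanent $\operatorname{per}(M)=\sum_{\sigma\in S_n}\prod_i a_{i,\sigma(i)}$ of $A(H)$ (for the empty graph both equal $1$). A cycle of length $l$ is a sequence of distinct vertices $u_1,\dots,u_l$ with $u_j\sim u_{j+1}$ for $j<l$ and $u_l\sim u_1$ (considered as a subgraph); a $4k$-cycle is a cycle whose length is a positive multiple of $4$. For a tuple $T_z$ of vertex-disjoint cycles in $H$, $\det(H\setminus T_z)$ is the determinant of the principal submatrix of $A(H)$ obtained by deleting the rows and columns of all vertices lying on the cycles of $T_z$ (empty determinant $=1$). For $z=0$ the only tuple is the empty tuple, so the $z=0$ term is $\det(H)$. *)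

theory Defs
  imports Complex_Main "HOL-Combinatorics.Permutations"
begin

definition simple_graph :: "'a set \<Rightarrow> ('a \<Rightarrow> 'a \<Rightarrow> bool) \<Rightarrow> bool" where
  "simple_graph V E \<longleftrightarrow> finite V \<and> (\<forall>u v. E u v \<longrightarrow> E v u) \<and> (\<forall>u. \<not> E u u)
     \<and> (\<forall>u v. E u v \<longrightarrow> u \<in> V \<and> v \<in> V)"

definition bipartite :: "'a set \<Rightarrow> ('a \<Rightarrow> 'a \<Rightarrow> bool) \<Rightarrow> bool" where
  "bipartite V E \<longleftrightarrow> (\<exists>X. X \<subseteq> V \<and> (\<forall>u v. E u v \<longrightarrow> (u \<in> X \<longleftrightarrow> v \<notin> X)))"

definition adj :: "('a \<Rightarrow> 'a \<Rightarrow> bool) \<Rightarrow> 'a \<Rightarrow> 'a \<Rightarrow> real" where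
  "adj E u v = (if E u v then 1 else 0)"

text \<open>Determinant / permanent of the principal submatrix of A(G) indexed by the vertex set S
(Leibniz formula; rows/columns indexed by the elements of S). Empty S gives 1.\<close>
definition det_on :: "('a \<Rightarrow> 'a \<Rightarrow> bool) \<Rightarrow> 'a set \<Rightarrow> real" where
  "det_on E S = (\<Sum>p\<in>{p. p permutes S}. of_int (sign p) * (\<Prod>v\<in>S. adj E v (p v)))"

definition per_on :: "('a \<Rightarrow> 'a \<Rightarrow> bool) \<Rightarrow> 'a set \<Rightarrow> real" where
  "per_on E S = (\<Sum>p\<in>{p. p permutes S}. (\<Prod>v\<in>S. adj E v (p v)))"

text \<open>A cycle of length l in the graph (S, E restricted to S), considered as a subgraph:
represented by its edge set (each edge an unordered pair). Its vertex set is the union of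
its edges.\<close>
definition cycle_in :: "'a set \<Rightarrow> ('a \<Rightarrow> 'a \<Rightarrow> bool) \<Rightarrow> nat \<Rightarrow> 'a set set \<Rightarrow> bool" where
  "cycle_in S E l C \<longleftrightarrow> (\<exists>us. length us = l \<and> l \<ge> 3 \<and> distinct us \<and> set us \<subseteq> S
      \<and> (\<forall>j<l. E (us ! j) (us ! ((j + 1) mod l)))
      \<and> C = {{us ! j, us ! ((j + 1) mod l)} | j. j < l})"

definition cycle_vertices :: "'a set set \<Rightarrow> 'a set" where
  "cycle_vertices C = \<Union>C"

definition cycle4k_in :: "'a set \<Rightarrow> ('a \<Rightarrow> 'a \<Rightarrow> bool) \<Rightarrow> 'a set set \<Rightarrow> bool" where
  "cycle4k_in S E C \<longleftrightarrow> (\<exists>k>0. cycle_in S E (4 * k) C)"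

definition disjoint_4k_tuples :: "'a set \<Rightarrow> ('a \<Rightarrow> 'a \<Rightarrow> bool) \<Rightarrow> nat \<Rightarrow> 'a set set list set" where
  "disjoint_4k_tuples S E z = {Ts. length Ts = z \<and> (\<forall>C\<in>set Ts. cycle4k_in S E C)
      \<and> (\<forall>a b. a < z \<and> b < z \<and> a \<noteq> b \<longrightarrow>
              cycle_vertices (Ts ! a) \<inter> cycle_vertices (Ts ! b) = {})}"

definition tuple_vertices :: "'a set set list \<Rightarrow> 'a set" where
  "tuple_vertices Ts = (\<Union>C\<in>set Ts. cycle_vertices C)"

end

theory Submission
  imports Defs "HOL-Combinatorics.Cycles" "HOL-Combinatorics.Orbits"
begin

definition PM :: "('a \<Rightarrow> 'a \<Rightarrow> bool) \<Rightarrow> 'a set \<Rightarrow> ('a \<Rightarrow> 'a) set" where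
  "PM E S = {p. p permutes S \<and> (\<forall>v\<in>S. E v (p v))}"

definition edg :: "('a \<Rightarrow> 'a) \<Rightarrow> 'a set \<Rightarrow> 'a set set" where
  "edg p B = {{x, p x} | x. x \<in> B}"

definition C4 :: "('a \<Rightarrow> 'a) \<Rightarrow> 'a set \<Rightarrow> 'a set set set" where
  "C4 p S = edg p ` {B. \<exists>s\<in>S. B = orbit p s \<and> 4 dvd card B}"

lemma finite_PM: "finite S \<Longrightarrow> finite (PM E S)"
  unfolding PM_def by (rule finite_subset[OF _ finite_permutations[of S]]) auto

lemma prod_adj: "finite S \<Longrightarrow> (\<Prod>v\<in>S. adj E v (p v)) = (if \<forall>v\<in>S. E v (p v) then 1 else 0)"
  by (auto simp: adj_def intro!: prod.neutral)

lemma per_PM: assumes "finite S" shows "per_on E S = real (card (PM E S))"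
proof -
  have "per_on E S = (\<Sum>p\<in>{p. p permutes S}. (if \<forall>v\<in>S. E v (p v) then 1 else 0))"
    unfolding per_on_def using prod_adj[OF assms] by simp
  also have "\<dots> = (\<Sum>p\<in>PM E S. 1)"
    unfolding PM_def by (subst sum.inter_filter[symmetric]) (auto simp: finite_permutations assms)
  finally show ?thesis by simp
qed

lemma det_PM: assumes "finite S" shows "det_on E S = (\<Sum>p\<in>PM E S. of_int (sign p))"
proof -
  have "det_on E S = (\<Sum>p\<in>{p. p permutes S}. (if \<forall>v\<in>S. E v (p v) then of_int (sign p) else 0))"
    unfolding det_on_def using prod_adj[OF assms] by (intro sum.cong) auto
  also have "\<dots> = (\<Sum>p\<in>PM E S. of_int (sign p))"
    unfolding PM_def by (subst sum.inter_filter[symmetric]) (auto simp: finite_permutations assms)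
  finally show ?thesis .
qed

lemma edg_Union: "p ` B \<subseteq> B \<Longrightarrow> \<Union>(edg p B) = B"
  unfolding edg_def by blast

lemma edg_cong: "(\<And>x. x \<in> B \<Longrightarrow> p x = q x) \<Longrightarrow> edg p B = edg q B"
  unfolding edg_def by (intro Collect_cong iffI; elim exE conjE; metis)

lemma orbit_props:
  assumes p: "p permutes S" and fin: "finite S"
  shows "s \<in> orbit p s" and "s \<in> S \<Longrightarrow> orbit p s \<subseteq> S" and "p ` orbit p s \<subseteq> orbit p s"
    and "x \<in> orbit p s \<Longrightarrow> orbit p x = orbit p s"
proof -
  have perm: "permutation p" using p fin permutation_permutes by blast
  show "s \<in> orbit p s" by (rule permutation_self_in_orbit[OF perm])
  show "s \<in> S \<Longrightarrow> orbit p s \<subseteq> S" using permutes_orbit_subset[OF p] .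
  show "p ` orbit p s \<subseteq> orbit p s" by (auto intro: orbit.step)
  show "x \<in> orbit p s \<Longrightarrow> orbit p x = orbit p s"
    using orbit_cyclic_eq3[OF cyclic_on_orbit[OF p fin, of s]] by simp
qed

lemma finite_C4: "finite S \<Longrightarrow> finite (C4 p S)"
  unfolding C4_def
  by (rule finite_imageI, rule finite_subset[of _ "(\<lambda>x. orbit p x) ` S"]) auto

lemma dec:
  assumes p: "p permutes S" and fin: "finite S" and s: "s \<in> S"
  defines "B \<equiv> orbit p s" and "q \<equiv> perm_restrict p (S - orbit p s)"
  shows "q permutes (S - B)"
    and "\<And>x. x \<in> S - B \<Longrightarrow> orbit q x = orbit p x"
    and "C4 p S = (if 4 dvd card B then insert (edg p B) (C4 q (S - B)) else C4 q (S - B))"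
    and "edg p B \<notin> C4 q (S - B)"
    and "B \<subseteq> S" "s \<in> B"
proof -
  have cyc: "cyclic_on p B" unfolding B_def using cyclic_on_orbit[OF p fin] .
  show qp: "q permutes (S - B)" unfolding q_def B_def[symmetric] by (rule perm_restrict_diff_cyclic[OF p cyc])
  show BS: "B \<subseteq> S" unfolding B_def using orbit_props(2)[OF p fin s] .
  show sB: "s \<in> B" unfolding B_def using orbit_props(1)[OF p fin] .
  have pin: "p x \<in> S - B" if "x \<in> S - B" for x
  proof -
    have "p x \<in> S" using that by (simp add: permutes_in_image[OF p])
    moreover have "p x \<notin> B" using that cyclic_on_f_in[OF p cyc, of x] by blast
    ultimately show ?thesis by blast
  qed
  show orbq: "orbit q x = orbit p x" if "x \<in> S - B" for x
  proof (rule orbit_cong0[symmetric, OF that])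
    show "p \<in> S - B \<rightarrow> S - B" using pin by blast
    show "\<And>y. y \<in> S - B \<Longrightarrow> p y = q y" by (simp add: q_def B_def[symmetric] perm_restrict_def)
  qed
  have orbB: "orbit p x = B" if "x \<in> B" for x
    using orbit_props(4)[OF p fin] that unfolding B_def by blast
  have qfin: "finite (S - B)" using fin by simp
  have edgq: "edg p (orbit q x) = edg q (orbit q x)" if "x \<in> S - B" for x
  proof (rule edg_cong)
    fix y assume "y \<in> orbit q x"
    then have "y \<in> S - B" using orbit_props(2)[OF qp qfin that] by blast
    then show "p y = q y" by (simp add: q_def B_def[symmetric] perm_restrict_def)
  qed
  have sets: "{B'. \<exists>x\<in>S. B' = orbit p x \<and> 4 dvd card B'} =
     (if 4 dvd card B then insert B else (\<lambda>X. X)) {B'. \<exists>x\<in>S - B. B' = orbit q x \<and> 4 dvd card B'}"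
  proof (rule set_eqI)
    fix Y
    show "Y \<in> {B'. \<exists>x\<in>S. B' = orbit p x \<and> 4 dvd card B'} \<longleftrightarrow>
      Y \<in> (if 4 dvd card B then insert B else (\<lambda>X. X)) {B'. \<exists>x\<in>S - B. B' = orbit q x \<and> 4 dvd card B'}"
    proof
      assume "Y \<in> {B'. \<exists>x\<in>S. B' = orbit p x \<and> 4 dvd card B'}"
      then obtain x where x: "x \<in> S" "Y = orbit p x" "4 dvd card Y" by blast
      show "Y \<in> (if 4 dvd card B then insert B else (\<lambda>X. X)) {B'. \<exists>x\<in>S - B. B' = orbit q x \<and> 4 dvd card B'}"
      proof (cases "x \<in> B")
        case True
        then have "Y = B" using orbB x by simp
        then show ?thesis using x by simp
      next
        case False
        then have "x \<in> S - B" using x by blast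
        then have "Y = orbit q x" using orbq x by simp
        then have "Y \<in> {B'. \<exists>x\<in>S - B. B' = orbit q x \<and> 4 dvd card B'}" using x \<open>x \<in> S - B\<close> by blast
        then show ?thesis by simp
      qed
    next
      assume Y: "Y \<in> (if 4 dvd card B then insert B else (\<lambda>X. X)) {B'. \<exists>x\<in>S - B. B' = orbit q x \<and> 4 dvd card B'}"
      show "Y \<in> {B'. \<exists>x\<in>S. B' = orbit p x \<and> 4 dvd card B'}"
      proof (cases "Y = B \<and> 4 dvd card B")
        case True
        then show ?thesis using s unfolding B_def by blast
      next
        case False
        then have "Y \<in> {B'. \<exists>x\<in>S - B. B' = orbit q x \<and> 4 dvd card B'}" using Y by (auto split: if_splits)
        then obtain x where "x \<in> S - B" "Y = orbit q x" "4 dvd card Y" by blast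
        then show ?thesis using orbq by force
      qed
    qed
  qed
  have img: "edg p ` {B'. \<exists>x\<in>S - B. B' = orbit q x \<and> 4 dvd card B'} = C4 q (S - B)"
    unfolding C4_def by (intro image_cong) (auto simp: edgq)
  show "C4 p S = (if 4 dvd card B then insert (edg p B) (C4 q (S - B)) else C4 q (S - B))"
    unfolding C4_def[of p S] sets using img by (auto simp: C4_def)
  show "edg p B \<notin> C4 q (S - B)"
  proof
    assume "edg p B \<in> C4 q (S - B)"
    then obtain x where x: "x \<in> S - B" and e: "edg p B = edg q (orbit q x)" unfolding C4_def by auto
    have "\<Union>(edg p B) = B" by (rule edg_Union) (simp add: B_def orbit_props(3)[OF p fin])
    moreover have "\<Union>(edg q (orbit q x)) = orbit q x" by (rule edg_Union) (simp add: orbit_props(3)[OF qp qfin])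
    ultimately have "B = orbit q x" using e by simp
    then have "B \<subseteq> S - B" using orbit_props(2)[OF qp qfin x] by simp
    then show False using sB by blast
  qed
qed

lemma sign_cycle: "distinct cs \<Longrightarrow> cs \<noteq> [] \<Longrightarrow> sign (cycle_of_list cs) = (-1) ^ (length cs - 1)"
proof (induction cs rule: cycle_of_list.induct)
  case (1 i j cs)
  have "sign (cycle_of_list (i # j # cs)) = sign (transpose i j) * sign (cycle_of_list (j # cs))"
    by (simp add: sign_compose permutation_swap_id permutation_of_cycle)
  also have "\<dots> = - ((-1) ^ (length (j # cs) - 1))" using 1 by (simp add: sign_swap_id)
  finally show ?case by (simp del: cycle_of_list.simps)
qed auto

lemma support_props:
  assumes p: "p permutes S" and fin: "finite S"
  shows "set (support p s) = orbit p s" and "distinct (support p s)"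
    and "length (support p s) = card (orbit p s)"
proof -
  have perm: "permutation p" using p fin permutation_permutes by blast
  show st: "set (support p s) = orbit p s"
    unfolding support_set[OF perm] orbit_altdef_permutation[OF perm] by auto
  show d: "distinct (support p s)" by (rule cycle_of_permutation[OF perm])
  show "length (support p s) = card (orbit p s)"
    using distinct_card[OF d] st by simp
qed

lemma p_decomp:
  assumes p: "p permutes S" and fin: "finite S"
  shows "p = cycle_of_list (support p s) \<circ> perm_restrict p (S - orbit p s)"
proof
  fix a
  have perm: "permutation p" using p fin permutation_permutes by blast
  note st = support_props(1)[OF p fin, of s]
  consider "a \<in> S - orbit p s" | "a \<in> orbit p s" | "a \<notin> S" "a \<notin> orbit p s" by blast
  then show "p a = (cycle_of_list (support p s) \<circ> perm_restrict p (S - orbit p s)) a"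
  proof cases
    case 1
    have "p a \<notin> orbit p s" using 1 cyclic_on_f_in[OF p cyclic_on_orbit[OF p fin, of s], of a] by blast
    then show ?thesis using 1 id_outside_supp[of "p a" "support p s"] st by (simp add: perm_restrict_def)
  next
    case 2
    then show ?thesis using cycle_restrict[OF perm, of a s] st by (simp add: perm_restrict_def)
  next
    case 3
    then show ?thesis using id_outside_supp[of a "support p s"] st p permutes_not_in[OF p 3(1)]
      by (simp add: perm_restrict_def)
  qed
qed

lemma parity:
  assumes p: "p \<in> PM E S" and bip: "\<forall>u v. E u v \<longrightarrow> (u \<in> X \<longleftrightarrow> v \<notin> X)" and s: "s \<in> S"
  shows "(p ^^ n) s \<in> S \<and> ((p ^^ n) s \<in> X \<longleftrightarrow> (s \<in> X \<longleftrightarrow> even n))"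
proof (induction n)
  case 0 then show ?case using s by simp
next
  case (Suc n)
  let ?y = "(p ^^ n) s"
  have pe: "p permutes S" "\<forall>v\<in>S. E v (p v)" using p unfolding PM_def by auto
  have "E ?y (p ?y)" using pe Suc by blast
  then have "(?y \<in> X \<longleftrightarrow> p ?y \<notin> X)" using bip by blast
  moreover have "p ?y \<in> S" using Suc pe(1) by (simp add: permutes_in_image)
  ultimately show ?case using Suc by auto
qed

lemma sign_arith:
  assumes "even L" "L > 0" "even M"
  shows "(-1::real) ^ (L - 1) * (-1) ^ (M div 2 + c) =
         (-1) ^ ((L + M) div 2 + (if 4 dvd L then Suc c else c))"
proof -
  obtain t u where t: "L = 2 * t" and u: "M = 2 * u" using assms by (auto elim!: evenE)
  have t0: "t > 0" using assms t by simp
  have L1: "L - 1 = Suc (2 * (t - 1))" using t t0 by simp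
  have dv: "4 dvd L \<longleftrightarrow> even t" using t by auto
  have LM: "(L + M) div 2 = t + u" using t u by simp
  have "(-1::real) ^ (L - 1) = -1" unfolding L1 by simp
  moreover have "(-1::real) ^ t = (if even t then 1 else -1)" by simp
  ultimately show ?thesis unfolding LM dv using u
    by (auto simp: power_add)
qed

lemma PM_restrict:
  assumes p: "p \<in> PM E S" and fin: "finite S" and s: "s \<in> S"
  shows "perm_restrict p (S - orbit p s) \<in> PM E (S - orbit p s)"
proof -
  have pp: "p permutes S" "\<forall>v\<in>S. E v (p v)" using p unfolding PM_def by auto
  show ?thesis using dec(1)[OF pp(1) fin s] pp(2) unfolding PM_def by (auto simp: perm_restrict_def)
qed

lemma signA:
  assumes bip: "\<forall>u v. E u v \<longrightarrow> (u \<in> X \<longleftrightarrow> v \<notin> X)"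
  shows "finite S \<Longrightarrow> p \<in> PM E S \<Longrightarrow> even (card S) \<and>
     real_of_int (sign p) = (-1) ^ (card S div 2 + card (C4 p S))"
proof (induction "card S" arbitrary: S p rule: less_induct)
  case less
  have pp: "p permutes S" "\<forall>v\<in>S. E v (p v)" using less.prems unfolding PM_def by auto
  show ?case
  proof (cases "S = {}")
    case True
    then have "p = id" using pp(1) by simp
    then show ?thesis using True by (simp add: C4_def)
  next
    case False
    then obtain s where s: "s \<in> S" by blast
    define B where "B = orbit p s"
    define q where "q = perm_restrict p (S - orbit p s)"
    note D = dec[OF pp(1) less.prems(1) s]
    have fin: "finite S" by (rule less.prems(1))
    have qPM: "q \<in> PM E (S - B)" unfolding q_def B_def by (rule PM_restrict[OF less.prems(2) fin s])
    have BS: "B \<subseteq> S" and sB: "s \<in> B" using D(5,6) unfolding B_def by auto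
    have cardlt: "card (S - B) < card S" by (rule psubset_card_mono) (use fin sB BS in auto)
    have IH: "even (card (S - B)) \<and> real_of_int (sign q) = (-1) ^ (card (S - B) div 2 + card (C4 q (S - B)))"
      using less.hyps[OF cardlt _ qPM] fin by simp
    have perm: "permutation p" using pp(1) fin permutation_permutes by blast
    have permq: "permutation q" using D(1) fin unfolding q_def permutation_permutes by blast
    have p_eq: "p = cycle_of_list (support p s) \<circ> q" unfolding q_def by (rule p_decomp[OF pp(1) fin])
    define L where "L = card B"
    have lenL: "length (support p s) = L" unfolding L_def B_def by (rule support_props(3)[OF pp(1) fin])
    have lp: "least_power p s = L" using lenL by simp
    have Lpos: "L > 0" using least_power_of_permutation(2)[OF perm, of s] lp by simp
    have sne: "support p s \<noteq> []" using lenL Lpos by auto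
    have sc: "sign (cycle_of_list (support p s)) = (-1) ^ (L - 1)"
      using sign_cycle[OF support_props(2)[OF pp(1) fin] sne] lenL by simp
    have sp: "sign p = (-1) ^ (L - 1) * sign q"
      by (subst p_eq, subst sign_compose[OF permutation_of_cycle permq]) (simp add: sc)
    have "(p ^^ L) s = s" using least_power_of_permutation(1)[OF perm, of s] lp by simp
    then have evL: "even L" using parity[OF less.prems(2) bip s, of L] by (cases "s \<in> X") auto
    have c1: "card B \<le> card S" by (rule card_mono[OF fin BS])
    have c2: "card (S - B) = card S - card B" by (rule card_Diff_subset[OF finite_subset[OF BS fin] BS])
    have cS: "card S = L + card (S - B)" unfolding L_def using c1 c2 by linarith
    have cC: "card (C4 p S) = (if 4 dvd L then Suc (card (C4 q (S - B))) else card (C4 q (S - B)))"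
      using D(3,4) finite_C4[of "S - B" q] fin unfolding L_def B_def q_def by simp
    have "real_of_int (sign p) = (-1) ^ (L - 1) * real_of_int (sign q)" using sp by simp
    also have "\<dots> = (-1) ^ (L - 1) * (-1) ^ (card (S - B) div 2 + card (C4 q (S - B)))" using IH by simp
    also have "\<dots> = (-1) ^ ((L + card (S - B)) div 2 + (if 4 dvd L then Suc (card (C4 q (S - B))) else card (C4 q (S - B))))"
      by (rule sign_arith[OF evL Lpos]) (use IH in simp)
    finally show ?thesis using cS cC evL IH by simp
  qed
qed


definition Rc :: "'a set \<Rightarrow> 'a set set \<Rightarrow> ('a \<Rightarrow> 'a) set" where
  "Rc W c = {r. r permutes W \<and> cyclic_on r W \<and> edg r W = c}"

lemma edg_inv: assumes "g permutes W" shows "edg (inv g) W = edg g W"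
proof -
  have a: "inv g x \<in> W" "g (inv g x) = x" if "x \<in> W" for x
    using that permutes_in_image[OF permutes_inv[OF assms]] permutes_inverses(1)[OF assms] by auto
  have b: "g y \<in> W" "inv g (g y) = y" if "y \<in> W" for y
    using that permutes_in_image[OF assms] permutes_inverses(2)[OF assms] by auto
  show ?thesis unfolding edg_def
  proof (intro Collect_cong iffI; elim exE conjE)
    fix e x assume "e = {x, inv g x}" "x \<in> W"
    then show "\<exists>y. e = {y, g y} \<and> y \<in> W" using a[of x] by (intro exI[of _ "inv g x"]) auto
  next
    fix e y assume "e = {y, g y}" "y \<in> W"
    then show "\<exists>x. e = {x, inv g x} \<and> x \<in> W" using b[of y] by (intro exI[of _ "g y"]) auto
  qed
qed

lemma cyc_unique:
  assumes g: "g permutes W" and fin: "finite W" and gc: "cyclic_on g W"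
    and h: "h permutes W" and hc: "cyclic_on h W" and W3: "card W \<ge> 3"
    and nb: "\<forall>x\<in>W. h x = g x \<or> h x = inv g x" and u: "u \<in> W" and hu: "h u = g u"
  shows "h = g"
proof -
  have gin: "(g ^^ n) u \<in> W" for n using u permutes_in_image[OF permutes_funpow[OF g]] by blast
  have step: "h ((g ^^ n) u) = g ((g ^^ n) u)" for n
  proof (induction n)
    case 0 then show ?case using hu by simp
  next
    case (Suc n)
    define a where "a = (g ^^ n) u"
    define b where "b = g a"
    have aW: "a \<in> W" unfolding a_def by (rule gin)
    have bW: "b \<in> W" unfolding b_def using aW by (simp add: permutes_in_image[OF g])
    have ha: "h a = b" using Suc unfolding a_def b_def by simp
    have ib: "inv g b = a" unfolding b_def using permutes_inverses(2)[OF g] by simp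
    have "h b = g b"
    proof (rule ccontr)
      assume "h b \<noteq> g b"
      moreover have "h b = g b \<or> h b = inv g b" using nb bW by blast
      ultimately have hb: "h b = a" using ib by simp
      have "orbit h a \<subseteq> {a, b}"
      proof
        fix y assume "y \<in> orbit h a"
        then show "y \<in> {a, b}" by induction (auto simp: ha hb)
      qed
      moreover have "orbit h a = W" using orbit_cyclic_eq3[OF hc aW] .
      ultimately have "card W \<le> card {a, b}" by (simp add: card_mono)
      also have "\<dots> \<le> 2" by (simp add: card_insert_le_m1)
      finally show False using W3 by simp
    qed
    then show ?case unfolding b_def a_def by simp
  qed
  have perm: "permutation g" using g fin permutation_permutes by blast
  have "W = orbit g u" using orbit_cyclic_eq3[OF gc u] by simp
  also have "\<dots> = {(g ^^ n) u | n. True}" by (rule orbit_altdef_permutation[OF perm])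
  finally have W: "W = {(g ^^ n) u | n. True}" .
  show ?thesis
  proof
    fix x show "h x = g x"
    proof (cases "x \<in> W")
      case True then show ?thesis using W step by auto
    next
      case False then show ?thesis by (simp add: permutes_not_in[OF g False] permutes_not_in[OF h False])
    qed
  qed
qed

lemma cycle_list_facts:
  assumes d: "distinct us" and l: "length us = l" and l3: "l \<ge> 3"
  shows "\<And>j. j < l \<Longrightarrow> cycle_of_list us (us ! j) = us ! ((j + 1) mod l)"
    and "cycle_of_list us permutes set us" and "cyclic_on (cycle_of_list us) (set us)"
    and "edg (cycle_of_list us) (set us) = {{us ! j, us ! ((j + 1) mod l)} | j. j < l}"
    and "cycle_of_list us \<noteq> inv (cycle_of_list us)"
proof -
  let ?r = "cycle_of_list us"
  have m1: "map ?r us = rotate 1 us" using cyclic_rotation[OF d, of 1] by simp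
  show rj: "?r (us ! j) = us ! ((j + 1) mod l)" if "j < l" for j
  proof -
    have "?r (us ! j) = map ?r us ! j" using that l by simp
    also have "\<dots> = rotate 1 us ! j" unfolding m1 ..
    also have "\<dots> = us ! ((1 + j) mod length us)" by (rule nth_rotate) (use that l in simp)
    finally show ?thesis using l by simp
  qed
  show rp: "?r permutes set us" by (rule cycle_permutes)
  have perm: "permutation ?r" by (rule permutation_of_cycle)
  have l0: "0 < l" using l3 by simp
  have rn: "(?r ^^ n) (us ! 0) = us ! (n mod l)" for n
  proof -
    have "(?r ^^ n) (us ! 0) = map (?r ^^ n) us ! 0" using l0 l by simp
    also have "\<dots> = us ! (n mod l)" unfolding cyclic_rotation[OF d, of n] using l0 l by (simp add: nth_rotate)
    finally show ?thesis .
  qed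
  have su: "set us = {us ! i | i. i < l}" using l by (auto simp: set_conv_nth)
  have "orbit ?r (us ! 0) = {(?r ^^ n) (us ! 0) | n. True}" by (rule orbit_altdef_permutation[OF perm])
  also have "\<dots> = set us" unfolding rn su using l0 by (auto intro: exI[of _ "i" for i] mod_less_divisor) (metis mod_less)
  finally have orb: "orbit ?r (us ! 0) = set us" .
  show "cyclic_on ?r (set us)" unfolding cyclic_on_def using orb l0 l by (intro bexI[of _ "us ! 0"]) auto
  show "edg ?r (set us) = {{us ! j, us ! ((j + 1) mod l)} | j. j < l}"
    unfolding edg_def su using rj by auto
  show "?r \<noteq> inv ?r"
  proof
    assume eq: "?r = inv ?r"
    have "?r (?r (us ! 0)) = ?r (inv ?r (us ! 0))" using eq by metis
    also have "\<dots> = us ! 0" using permutes_inverses(1)[OF rp] by simp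
    finally have e0: "?r (?r (us ! 0)) = us ! 0" .
    have r0: "?r (us ! 0) = us ! 1" using rj[of 0] l3 by simp
    have "(1 + 1) mod l = 2" using l3 by simp
    then have r1: "?r (us ! 1) = us ! 2" using rj[of 1] l3 by (simp add: numeral_2_eq_2)
    have "us ! 2 = us ! 0" using e0 r0 r1 by simp
    then show False using d l l3 nth_eq_iff_index_eq[OF d, of 2 0] by simp
  qed
qed

lemma cycle_facts:
  assumes cyc: "cycle_in S E l c" and sym: "\<forall>u v. E u v \<longrightarrow> E v u"
  shows "\<Union>c \<subseteq> S" and "card (\<Union>c) = l" and "finite (\<Union>c)" and "card (Rc (\<Union>c) c) = 2"
    and "\<And>r x. r \<in> Rc (\<Union>c) c \<Longrightarrow> x \<in> \<Union>c \<Longrightarrow> E x (r x)"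
    and "l \<ge> 3"
proof -
  obtain us where us: "length us = l" "l \<ge> 3" "distinct us" "set us \<subseteq> S"
      "\<forall>j<l. E (us ! j) (us ! ((j + 1) mod l))" "c = {{us ! j, us ! ((j + 1) mod l)} | j. j < l}"
    using cyc unfolding cycle_in_def by blast
  show "l \<ge> 3" using us by simp
  let ?r = "cycle_of_list us"
  note F = cycle_list_facts[OF us(3) us(1) us(2)]
  have ce: "c = edg ?r (set us)" using F(4) us(6) by simp
  have img: "?r ` set us \<subseteq> set us" using permutes_in_image[OF F(2)] by auto
  have U: "\<Union>c = set us" unfolding ce by (rule edg_Union[OF img])
  show "\<Union>c \<subseteq> S" using U us by simp
  show "card (\<Union>c) = l" using U us distinct_card by metis
  show "finite (\<Union>c)" using U by simp
  have inR: "?r \<in> Rc (set us) c" unfolding Rc_def using F(2,3) ce by simp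
  have cinv: "cyclic_on (inv ?r) (set us)"
    using F(3) orbit_inv_eq[OF permutation_of_cycle, of us] unfolding cyclic_on_def by auto
  have invR: "inv ?r \<in> Rc (set us) c" unfolding Rc_def
    using permutes_inv[OF F(2)] cinv ce edg_inv[OF F(2)] by auto
  have R2: "Rc (set us) c = {?r, inv ?r}"
  proof
    show "{?r, inv ?r} \<subseteq> Rc (set us) c" using inR invR by simp
    show "Rc (set us) c \<subseteq> {?r, inv ?r}"
    proof
      fix h assume h: "h \<in> Rc (set us) c"
      have hp: "h permutes set us" "cyclic_on h (set us)" "edg h (set us) = c" using h unfolding Rc_def by auto
      have nb: "\<forall>x\<in>set us. h x = ?r x \<or> h x = inv ?r x"
      proof
        fix x assume x: "x \<in> set us"
        have "{x, h x} \<in> c" using hp(3) x unfolding edg_def by blast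
        then obtain y where y: "y \<in> set us" "{x, h x} = {y, ?r y}" unfolding ce edg_def by blast
        have "inv ?r (?r y) = y" using permutes_inverses(2)[OF F(2)] by simp
        then show "h x = ?r x \<or> h x = inv ?r x" using y(2) by (auto simp: doubleton_eq_iff)
      qed
      have u0: "us ! 0 \<in> set us" using us by simp
      have c3: "card (set us) \<ge> 3" using us distinct_card by metis
      have bij: "bij ?r" using permutes_bij[OF F(2)] .
      show "h \<in> {?r, inv ?r}"
      proof (cases "h (us ! 0) = ?r (us ! 0)")
        case True
        have "h = ?r" by (rule cyc_unique[OF F(2) _ F(3) hp(1,2) c3 nb u0 True]) simp
        then show ?thesis by simp
      next
        case False
        then have hu: "h (us ! 0) = inv ?r (us ! 0)" using nb u0 by blast
        have nb': "\<forall>x\<in>set us. h x = inv ?r x \<or> h x = inv (inv ?r) x"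
          using nb inv_inv_eq[OF bij] by auto
        have ci: "cyclic_on (inv ?r) (set us)" using invR unfolding Rc_def by simp
        have "h = inv ?r" by (rule cyc_unique[OF permutes_inv[OF F(2)] _ ci hp(1,2) c3 nb' u0 hu]) simp
        then show ?thesis by simp
      qed
    qed
  qed
  show "card (Rc (\<Union>c) c) = 2" unfolding U R2 using F(5) by simp
  show "E x (r x)" if "r \<in> Rc (\<Union>c) c" "x \<in> \<Union>c" for r x
  proof -
    have "{x, r x} \<in> c" using that unfolding Rc_def edg_def by blast
    then obtain j where j: "j < l" "{x, r x} = {us ! j, us ! ((j + 1) mod l)}" using us(6) by blast
    have "E (us ! j) (us ! ((j + 1) mod l))" using us(5) j by blast
    then show ?thesis using j(2) sym by (auto simp: doubleton_eq_iff)
  qed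
qed


definition merge :: "'a set \<Rightarrow> ('a \<Rightarrow> 'a) \<Rightarrow> ('a \<Rightarrow> 'a) \<Rightarrow> 'a \<Rightarrow> 'a" where
  "merge W r q = (\<lambda>x. if x \<in> W then r x else q x)"

lemma merge_props:
  assumes r: "r \<in> Rc W c" and q: "q \<in> PM E (S - W)" and WS: "W \<subseteq> S" and fin: "finite S"
    and W4: "4 dvd card W" and Wne: "W \<noteq> {}" and Er: "\<forall>x\<in>W. E x (r x)"
  shows "merge W r q \<in> PM E S" and "C4 (merge W r q) S = insert c (C4 q (S - W))"
    and "c \<notin> C4 q (S - W)"
proof -
  have rp: "r permutes W" "cyclic_on r W" "edg r W = c" using r unfolding Rc_def by auto
  have qp: "q permutes (S - W)" "\<forall>v\<in>S - W. E v (q v)" using q unfolding PM_def by auto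
  let ?p = "merge W r q"
  have peq: "?p = r \<circ> q"
  proof
    fix x show "?p x = (r \<circ> q) x"
    proof (cases "x \<in> W")
      case True
      then have "q x = x" using permutes_not_in[OF qp(1)] by blast
      then show ?thesis using True by (simp add: merge_def)
    next
      case False
      have "q x \<notin> W"
      proof (cases "x \<in> S - W")
        case True then show ?thesis using permutes_in_image[OF qp(1)] by blast
      next
        case False then show ?thesis using permutes_not_in[OF qp(1) False] \<open>x \<notin> W\<close> by simp
      qed
      then show ?thesis using False permutes_not_in[OF rp(1)] by (simp add: merge_def)
    qed
  qed
  have pS: "?p permutes S" unfolding peq
    by (rule permutes_compose[OF permutes_subset[OF qp(1)] permutes_subset[OF rp(1) WS]]) auto
  show pPM: "?p \<in> PM E S" unfolding PM_def using pS Er qp(2) by (auto simp: merge_def)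
  obtain w where w: "w \<in> W" using Wne by blast
  have wS: "w \<in> S" using w WS by blast
  have rin: "r \<in> W \<rightarrow> W" using permutes_in_image[OF rp(1)] by blast
  have orb: "orbit ?p w = W"
  proof -
    have "orbit r w = orbit ?p w"
      by (rule orbit_cong0[OF w rin]) (simp add: merge_def)
    then show ?thesis using orbit_cyclic_eq3[OF rp(2) w] by simp
  qed
  have qeq: "perm_restrict ?p (S - W) = q"
  proof
    fix x show "perm_restrict ?p (S - W) x = q x"
      using permutes_not_in[OF qp(1), of x] by (auto simp: perm_restrict_def merge_def)
  qed
  have ee: "edg ?p W = c" using rp(3) edg_cong[of W ?p r] by (simp add: merge_def)
  note D = dec[OF pS fin wS]
  show "C4 ?p S = insert c (C4 q (S - W))" using D(3) unfolding orb qeq ee using W4 by simp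
  show "c \<notin> C4 q (S - W)" using D(4) unfolding orb qeq ee .
qed

lemma merge_inj:
  assumes "r permutes W" "r' permutes W" "q permutes (S - W)" "q' permutes (S - W)"
    and "merge W r q = merge W r' q'"
  shows "r = r'" and "q = q'"
proof -
  show "r = r'"
  proof
    fix x show "r x = r' x"
      using assms(5) permutes_not_in[OF assms(1), of x] permutes_not_in[OF assms(2), of x]
      by (cases "x \<in> W") (auto simp: merge_def fun_eq_iff dest: spec[of _ x])
  qed
  show "q = q'"
  proof
    fix x show "q x = q' x"
      using assms(5) permutes_not_in[OF assms(3), of x] permutes_not_in[OF assms(4), of x]
      by (cases "x \<in> W") (auto simp: merge_def fun_eq_iff dest: spec[of _ x])
  qed
qed

lemma B1:
  assumes sym: "\<forall>u v. E u v \<longrightarrow> E v u" and fin: "finite S"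
    and cyc: "cycle4k_in S E c" and A: "\<forall>a\<in>A. \<Union>a \<inter> \<Union>c = {}"
  shows "(\<Sum>p\<in>{p\<in>PM E S. insert c A \<subseteq> C4 p S}. (-1::real) ^ card (C4 p S)) =
         - 2 * (\<Sum>q\<in>{q\<in>PM E (S - \<Union>c). A \<subseteq> C4 q (S - \<Union>c)}. (-1) ^ card (C4 q (S - \<Union>c)))"
proof -
  obtain k where k: "k > 0" "cycle_in S E (4 * k) c" using cyc unfolding cycle4k_in_def by blast
  define W where "W = \<Union>c"
  note CF = cycle_facts[OF k(2) sym]
  have WS: "W \<subseteq> S" using CF(1) unfolding W_def .
  have W4: "4 dvd card W" using CF(2) unfolding W_def by simp
  have Wne: "W \<noteq> {}"
  proof
    assume "W = {}"
    then have "card W = 0" by simp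
    then show False using CF(2) k(1) unfolding W_def by simp
  qed
  have cA: "c \<notin> A" using A Wne unfolding W_def by blast
  have Er: "\<forall>x\<in>W. E x (r x)" if "r \<in> Rc W c" for r using CF(5) that unfolding W_def by blast
  define Q where "Q = {q\<in>PM E (S - W). A \<subseteq> C4 q (S - W)}"
  define P where "P = {p\<in>PM E S. insert c A \<subseteq> C4 p S}"
  have MP: "merge W r q \<in> PM E S \<and> C4 (merge W r q) S = insert c (C4 q (S - W)) \<and> c \<notin> C4 q (S - W)"
    if "r \<in> Rc W c" "q \<in> PM E (S - W)" for r q
    using merge_props[OF that WS fin W4 Wne Er[OF that(1)]] by blast
  have bij: "bij_betw (\<lambda>(r, q). merge W r q) (Rc W c \<times> Q) P"
  proof (rule bij_betw_imageI)
    show "inj_on (\<lambda>(r, q). merge W r q) (Rc W c \<times> Q)"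
    proof (rule inj_onI, clarify)
      fix r q r' q' assume a: "r \<in> Rc W c" "q \<in> Q" "r' \<in> Rc W c" "q' \<in> Q" "merge W r q = merge W r' q'"
      have p1: "r permutes W" "r' permutes W" using a unfolding Rc_def by auto
      have p2: "q permutes (S - W)" "q' permutes (S - W)" using a unfolding Q_def PM_def by auto
      show "r = r' \<and> q = q'" using merge_inj[OF p1 p2 a(5)] by simp
    qed
    show "(\<lambda>(r, q). merge W r q) ` (Rc W c \<times> Q) = P"
    proof
      show "(\<lambda>(r, q). merge W r q) ` (Rc W c \<times> Q) \<subseteq> P"
        using MP unfolding P_def Q_def by auto
      show "P \<subseteq> (\<lambda>(r, q). merge W r q) ` (Rc W c \<times> Q)"
      proof
        fix p assume pP: "p \<in> P"
        then have pPM: "p \<in> PM E S" and cC: "c \<in> C4 p S" and AC: "A \<subseteq> C4 p S" unfolding P_def by auto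
        have pS: "p permutes S" using pPM unfolding PM_def by auto
        have perm: "permutation p" using pS fin permutation_permutes by blast
        obtain s where s: "s \<in> S" "4 dvd card (orbit p s)" "c = edg p (orbit p s)"
          using cC unfolding C4_def by blast
        have WB: "W = orbit p s" unfolding W_def s(3) by (rule edg_Union[OF orbit_props(3)[OF pS fin]])
        define r where "r = perm_restrict p W"
        define q where "q = perm_restrict p (S - W)"
        have rc: "r = cycle_of_list (support p s)"
        proof
          fix x show "r x = cycle_of_list (support p s) x"
          proof (cases "x \<in> W")
            case True
            then show ?thesis using cycle_restrict[OF perm, of x s] support_props(1)[OF pS fin, of s] WB
              by (simp add: r_def perm_restrict_def)
          next
            case False
            then show ?thesis using id_outside_supp[of x "support p s"] support_props(1)[OF pS fin, of s] WB
              by (simp add: r_def perm_restrict_def)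
          qed
        qed
        have rR: "r \<in> Rc W c"
        proof -
          have "r permutes W" unfolding rc WB using cycle_permutes[of "support p s"] support_props(1)[OF pS fin, of s] by simp
          moreover have "cyclic_on r W" unfolding r_def cyclic_on_perm_restrict WB by (rule cyclic_on_orbit[OF pS fin])
          moreover have "edg r W = c" using edg_cong[of W r p] s(3) WB by (simp add: r_def perm_restrict_def)
          ultimately show ?thesis unfolding Rc_def by simp
        qed
        have qPM: "q \<in> PM E (S - W)" unfolding q_def WB by (rule PM_restrict[OF pPM fin s(1)])
        have peq: "p = merge W r q"
        proof
          fix x show "p x = merge W r q x"
            using permutes_not_in[OF pS, of x] WS by (auto simp: merge_def r_def q_def perm_restrict_def)
        qed
        have "C4 (merge W r q) S = insert c (C4 q (S - W))" using MP[OF rR qPM] by blast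
        then have "C4 p S = insert c (C4 q (S - W))" by (simp only: peq[symmetric])
        then have "A \<subseteq> C4 q (S - W)" using AC cA by (simp add: subset_insert)
        then have "q \<in> Q" using qPM unfolding Q_def by simp
        then have rq: "(r, q) \<in> Rc W c \<times> Q" using rR by simp
        show "p \<in> (\<lambda>(r, q). merge W r q) ` (Rc W c \<times> Q)"
          by (rule rev_image_eqI[OF rq]) (simp add: peq[symmetric])
      qed
    qed
  qed
  have finQ: "finite Q" unfolding Q_def using finite_PM[of "S - W" E] fin by (auto intro: finite_subset)
  have "(\<Sum>p\<in>P. (-1::real) ^ card (C4 p S)) =
        (\<Sum>x\<in>Rc W c \<times> Q. (-1::real) ^ card (C4 ((\<lambda>(r, q). merge W r q) x) S))"
    by (rule sum.reindex_bij_betw[OF bij, symmetric])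
  also have "\<dots> = (\<Sum>(r, q)\<in>Rc W c \<times> Q. - ((-1::real) ^ card (C4 q (S - W))))"
  proof (rule sum.cong[OF refl], clarify)
    fix r q assume a: "r \<in> Rc W c" "q \<in> Q"
    then have qPM: "q \<in> PM E (S - W)" unfolding Q_def by simp
    have "card (C4 (merge W r q) S) = Suc (card (C4 q (S - W)))"
      using MP[OF a(1) qPM] finite_C4[of "S - W" q] fin by simp
    then show "(-1::real) ^ card (C4 (merge W r q) S) = - ((-1) ^ card (C4 q (S - W)))"
      by simp
  qed
  also have "\<dots> = (\<Sum>r\<in>Rc W c. \<Sum>q\<in>Q. - ((-1::real) ^ card (C4 q (S - W))))"
    by (rule sum.cartesian_product[symmetric])
  also have "\<dots> = real (card (Rc W c)) * (\<Sum>q\<in>Q. - ((-1::real) ^ card (C4 q (S - W))))"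
    by simp
  also have "\<dots> = - 2 * (\<Sum>q\<in>Q. (-1::real) ^ card (C4 q (S - W)))"
    using CF(4) unfolding W_def by (simp add: sum_negf)
  finally show ?thesis unfolding P_def Q_def W_def .
qed


lemma cycle_in_set: assumes "cycle_in S E l c"
  obtains us where "length us = l" "l \<ge> 3" "distinct us" "set us \<subseteq> S"
      "\<forall>j<l. E (us ! j) (us ! ((j + 1) mod l))" "c = {{us ! j, us ! ((j + 1) mod l)} | j. j < l}"
      "\<Union>c = set us"
proof -
  obtain us where us: "length us = l" "l \<ge> 3" "distinct us" "set us \<subseteq> S"
      "\<forall>j<l. E (us ! j) (us ! ((j + 1) mod l))" "c = {{us ! j, us ! ((j + 1) mod l)} | j. j < l}"
    using assms unfolding cycle_in_def by blast
  have "\<Union>c = set us"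
  proof
    show "\<Union>c \<subseteq> set us"
    proof
      fix x assume "x \<in> \<Union>c"
      then obtain j where j: "j < l" "x \<in> {us ! j, us ! ((j + 1) mod l)}" using us(6) by blast
      have "(j + 1) mod l < length us" using us(1,2) by simp
      then have "us ! ((j + 1) mod l) \<in> set us" by (rule nth_mem)
      moreover have "us ! j \<in> set us" using j(1) us(1) by simp
      ultimately show "x \<in> set us" using j(2) by blast
    qed
    show "set us \<subseteq> \<Union>c" using us(1,6) by (auto simp: set_conv_nth)
  qed
  then show ?thesis using that us by blast
qed

lemma cycle_in_mono: "cycle_in S E l c \<Longrightarrow> \<Union>c \<subseteq> T \<Longrightarrow> cycle_in T E l c"
  by (erule cycle_in_set) (auto simp: cycle_in_def)

lemma cycle4k_mono: "cycle4k_in S E c \<Longrightarrow> \<Union>c \<subseteq> T \<Longrightarrow> cycle4k_in T E c"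
  unfolding cycle4k_in_def using cycle_in_mono by blast

lemma cycle4k_facts: assumes "cycle4k_in S E c"
  shows "\<Union>c \<subseteq> S" "finite (\<Union>c)" "4 dvd card (\<Union>c)" "\<Union>c \<noteq> {}"
proof -
  obtain k where k: "k > 0" "cycle_in S E (4 * k) c" using assms unfolding cycle4k_in_def by blast
  obtain us where us: "length us = 4 * k" "distinct us" "set us \<subseteq> S" "\<Union>c = set us"
    by (rule cycle_in_set[OF k(2)]) blast
  show "\<Union>c \<subseteq> S" "finite (\<Union>c)" using us by auto
  show "4 dvd card (\<Union>c)" using us distinct_card by (metis dvd_triv_left)
  show "\<Union>c \<noteq> {}" using us k by auto
qed

lemma D_Cons:
  assumes "c # Ts \<in> disjoint_4k_tuples S E n"
  shows "cycle4k_in S E c" "\<forall>a\<in>set Ts. \<Union>a \<inter> \<Union>c = {}"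
    "Ts \<in> disjoint_4k_tuples (S - \<Union>c) E (length Ts)"
proof -
  have A: "length (c # Ts) = n" "\<forall>C\<in>set (c # Ts). cycle4k_in S E C"
    "\<forall>a b. a < n \<and> b < n \<and> a \<noteq> b \<longrightarrow> \<Union>((c # Ts) ! a) \<inter> \<Union>((c # Ts) ! b) = {}"
    using assms unfolding disjoint_4k_tuples_def cycle_vertices_def by auto
  show "cycle4k_in S E c" using A by simp
  show dis: "\<forall>a\<in>set Ts. \<Union>a \<inter> \<Union>c = {}"
  proof
    fix a assume "a \<in> set Ts"
    then obtain i where i: "i < length Ts" "a = Ts ! i" by (auto simp: set_conv_nth)
    then show "\<Union>a \<inter> \<Union>c = {}" using A(3)[rule_format, of "Suc i" 0] A(1) by auto
  qed
  have "\<forall>a\<in>set Ts. cycle4k_in (S - \<Union>c) E a"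
  proof
    fix a assume a: "a \<in> set Ts"
    then have "cycle4k_in S E a" using A by simp
    moreover have "\<Union>a \<subseteq> S - \<Union>c" using cycle4k_facts(1)[OF \<open>cycle4k_in S E a\<close>] dis a by blast
    ultimately show "cycle4k_in (S - \<Union>c) E a" by (rule cycle4k_mono)
  qed
  moreover have "\<forall>a b. a < length Ts \<and> b < length Ts \<and> a \<noteq> b \<longrightarrow> \<Union>(Ts ! a) \<inter> \<Union>(Ts ! b) = {}"
  proof (intro allI impI)
    fix a b assume "a < length Ts \<and> b < length Ts \<and> a \<noteq> b"
    then show "\<Union>(Ts ! a) \<inter> \<Union>(Ts ! b) = {}" using A(3)[rule_format, of "Suc a" "Suc b"] A(1) by auto
  qed
  ultimately show "Ts \<in> disjoint_4k_tuples (S - \<Union>c) E (length Ts)"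
    unfolding disjoint_4k_tuples_def cycle_vertices_def by auto
qed

lemma tv_Cons: "tuple_vertices (c # Ts) = \<Union>c \<union> tuple_vertices Ts"
  unfolding tuple_vertices_def cycle_vertices_def by auto

lemma D_tv:
  "Ts \<in> disjoint_4k_tuples S E n \<Longrightarrow> tuple_vertices Ts \<subseteq> S \<and> finite (tuple_vertices Ts) \<and> 4 dvd card (tuple_vertices Ts)"
proof (induction Ts arbitrary: S n)
  case Nil then show ?case by (simp add: tuple_vertices_def)
next
  case (Cons c Ts)
  note D = D_Cons[OF Cons.prems]
  have IH: "tuple_vertices Ts \<subseteq> S - \<Union>c \<and> finite (tuple_vertices Ts) \<and> 4 dvd card (tuple_vertices Ts)"
    using Cons.IH[OF D(3)] .
  note F = cycle4k_facts[OF D(1)]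
  have "card (tuple_vertices (c # Ts)) = card (\<Union>c) + card (tuple_vertices Ts)"
    unfolding tv_Cons using IH F by (intro card_Un_disjoint) auto
  then show ?case unfolding tv_Cons using IH F by auto
qed

lemma B:
  assumes sym: "\<forall>u v. E u v \<longrightarrow> E v u"
  shows "finite S \<Longrightarrow> Ts \<in> disjoint_4k_tuples S E n \<Longrightarrow>
    (\<Sum>p\<in>{p\<in>PM E S. set Ts \<subseteq> C4 p S}. (-1::real) ^ card (C4 p S)) =
    (-2) ^ length Ts * (\<Sum>q\<in>PM E (S - tuple_vertices Ts). (-1) ^ card (C4 q (S - tuple_vertices Ts)))"
proof (induction Ts arbitrary: S n)
  case Nil then show ?case by (simp add: tuple_vertices_def)
next
  case (Cons c Ts)
  note D = D_Cons[OF Cons.prems(2)]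
  have "(\<Sum>p\<in>{p\<in>PM E S. set (c # Ts) \<subseteq> C4 p S}. (-1::real) ^ card (C4 p S)) =
        - 2 * (\<Sum>q\<in>{q\<in>PM E (S - \<Union>c). set Ts \<subseteq> C4 q (S - \<Union>c)}. (-1) ^ card (C4 q (S - \<Union>c)))"
    using B1[OF sym Cons.prems(1) D(1) D(2)] by simp
  also have "\<dots> = - 2 * ((-2) ^ length Ts * (\<Sum>q\<in>PM E (S - \<Union>c - tuple_vertices Ts). (-1) ^ card (C4 q (S - \<Union>c - tuple_vertices Ts))))"
    using Cons.IH[OF _ D(3)] Cons.prems(1) by simp
  also have "S - \<Union>c - tuple_vertices Ts = S - tuple_vertices (c # Ts)" unfolding tv_Cons by blast
  finally show ?case by simp
qed


lemma Union_edg_orbit: "p permutes S \<Longrightarrow> finite S \<Longrightarrow> \<Union>(edg p (orbit p s)) = orbit p s"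
  by (rule edg_Union[OF orbit_props(3)])

lemma C4_cycle:
  assumes p: "p \<in> PM E S" and fin: "finite S" and a: "a \<in> C4 p S"
  shows "cycle4k_in S E a"
proof -
  have pp: "p permutes S" "\<forall>v\<in>S. E v (p v)" using p unfolding PM_def by auto
  have perm: "permutation p" using pp(1) fin permutation_permutes by blast
  obtain s where s: "s \<in> S" "4 dvd card (orbit p s)" "a = edg p (orbit p s)"
    using a unfolding C4_def by blast
  define B where "B = orbit p s"
  define l where "l = card B"
  define us where "us = support p s"
  have lus: "length us = l" unfolding us_def l_def B_def by (rule support_props(3)[OF pp(1) fin])
  have dus: "distinct us" unfolding us_def by (rule support_props(2)[OF pp(1) fin])
  have sus: "set us = B" unfolding us_def B_def by (rule support_props(1)[OF pp(1) fin])
  have BS: "B \<subseteq> S" unfolding B_def by (rule orbit_props(2)[OF pp(1) fin s(1)])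
  have lp: "least_power p s = l" using lus unfolding us_def by simp
  have l0: "l > 0" using least_power_of_permutation(2)[OF perm, of s] lp by simp
  have pl: "(p ^^ l) s = s" using least_power_of_permutation(1)[OF perm, of s] lp by simp
  obtain k where k: "l = 4 * k" using s(2) unfolding l_def B_def by blast
  have k0: "k > 0" using k l0 by simp
  have usj: "us ! j = (p ^^ j) s" if "j < l" for j using that lp unfolding us_def by simp
  have nxt: "us ! ((j + 1) mod l) = p (us ! j)" if "j < l" for j
  proof -
    have "us ! ((j + 1) mod l) = (p ^^ ((j + 1) mod l)) s" using usj[of "(j + 1) mod l"] l0 by simp
    also have "\<dots> = (p ^^ (j + 1)) s" by (rule funpow_mod_eq[OF pl])
    also have "\<dots> = p (us ! j)" using usj[OF that] by simp
    finally show ?thesis .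
  qed
  have uS: "us ! j \<in> S" if "j < l" for j using that lus sus BS nth_mem by blast
  have cyc: "cycle_in S E l a"
    unfolding cycle_in_def
  proof (intro exI[of _ us] conjI)
    show "length us = l" by (rule lus)
    show "3 \<le> l" using k k0 by simp
    show "distinct us" by (rule dus)
    show "set us \<subseteq> S" using sus BS by simp
    show "\<forall>j<l. E (us ! j) (us ! ((j + 1) mod l))" using nxt uS pp(2) by simp
    show "a = {{us ! j, us ! ((j + 1) mod l)} |j. j < l}"
    proof -
      have "a = {{x, p x} | x. x \<in> B}" unfolding s(3) edg_def B_def ..
      also have "\<dots> = {{us ! j, us ! ((j + 1) mod l)} |j. j < l}"
      proof (intro Collect_cong iffI; elim exE conjE)
        fix e x assume "e = {x, p x}" "x \<in> B"
        then obtain j where "j < l" "x = us ! j" using sus lus by (auto simp: set_conv_nth)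
        then show "\<exists>j. e = {us ! j, us ! ((j + 1) mod l)} \<and> j < l" using nxt \<open>e = {x, p x}\<close> by auto
      next
        fix e j assume "e = {us ! j, us ! ((j + 1) mod l)}" "j < l"
        then show "\<exists>x. e = {x, p x} \<and> x \<in> B" using nxt sus lus nth_mem by (intro exI[of _ "us ! j"]) auto
      qed
      finally show ?thesis .
    qed
  qed
  show ?thesis unfolding cycle4k_in_def using cyc k k0 by blast
qed

lemma C4_disj:
  assumes p: "p permutes S" and fin: "finite S" and a: "a \<in> C4 p S" and b: "b \<in> C4 p S" and ab: "a \<noteq> b"
  shows "\<Union>a \<inter> \<Union>b = {}"
proof -
  obtain s where s: "s \<in> S" "a = edg p (orbit p s)" using a unfolding C4_def by blast
  obtain t where t: "t \<in> S" "b = edg p (orbit p t)" using b unfolding C4_def by blast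
  have ua: "\<Union>a = orbit p s" and ub: "\<Union>b = orbit p t" using s t Union_edg_orbit[OF p fin] by auto
  show ?thesis
  proof (rule ccontr)
    assume "\<Union>a \<inter> \<Union>b \<noteq> {}"
    then obtain x where "x \<in> orbit p s" "x \<in> orbit p t" using ua ub by blast
    then have "orbit p s = orbit p t" using orbit_props(4)[OF p fin] by metis
    then show False using ab s t by simp
  qed
qed

lemma D_distinct: assumes "Ts \<in> disjoint_4k_tuples S E n" shows "distinct Ts"
proof -
  have A: "length Ts = n" "\<forall>C\<in>set Ts. cycle4k_in S E C"
    "\<forall>a b. a < n \<and> b < n \<and> a \<noteq> b \<longrightarrow> \<Union>(Ts ! a) \<inter> \<Union>(Ts ! b) = {}"
    using assms unfolding disjoint_4k_tuples_def cycle_vertices_def by auto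
  show ?thesis unfolding distinct_conv_nth
  proof (intro allI impI)
    fix i j assume ij: "i < length Ts" "j < length Ts" "i \<noteq> j"
    have "\<Union>(Ts ! i) \<noteq> {}" using cycle4k_facts(4) A(2) ij(1) nth_mem by blast
    moreover have "\<Union>(Ts ! i) \<inter> \<Union>(Ts ! j) = {}" using A(3) A(1) ij by blast
    ultimately show "Ts ! i \<noteq> Ts ! j" by auto
  qed
qed

lemma count_set:
  assumes p: "p \<in> PM E S" and fin: "finite S"
  shows "{Ts \<in> disjoint_4k_tuples S E z. set Ts \<subseteq> C4 p S} = {Ts. length Ts = z \<and> distinct Ts \<and> set Ts \<subseteq> C4 p S}"
proof -
  have pS: "p permutes S" using p unfolding PM_def by auto
  show ?thesis
  proof (intro set_eqI iffI)
    fix Ts assume "Ts \<in> {Ts \<in> disjoint_4k_tuples S E z. set Ts \<subseteq> C4 p S}"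
    then show "Ts \<in> {Ts. length Ts = z \<and> distinct Ts \<and> set Ts \<subseteq> C4 p S}"
      using D_distinct unfolding disjoint_4k_tuples_def by auto
  next
    fix Ts assume T: "Ts \<in> {Ts. length Ts = z \<and> distinct Ts \<and> set Ts \<subseteq> C4 p S}"
    have "\<forall>C\<in>set Ts. cycle4k_in S E C" using T C4_cycle[OF p fin] by blast
    moreover have "\<forall>a b. a < z \<and> b < z \<and> a \<noteq> b \<longrightarrow> cycle_vertices (Ts ! a) \<inter> cycle_vertices (Ts ! b) = {}"
    proof (intro allI impI)
      fix a b assume ab: "a < z \<and> b < z \<and> a \<noteq> b"
      have "Ts ! a \<noteq> Ts ! b" using T ab nth_eq_iff_index_eq by auto
      moreover have "Ts ! a \<in> C4 p S" "Ts ! b \<in> C4 p S" using T ab nth_mem by auto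
      ultimately show "cycle_vertices (Ts ! a) \<inter> cycle_vertices (Ts ! b) = {}"
        unfolding cycle_vertices_def using C4_disj[OF pS fin] by blast
    qed
    ultimately show "Ts \<in> {Ts \<in> disjoint_4k_tuples S E z. set Ts \<subseteq> C4 p S}"
      using T unfolding disjoint_4k_tuples_def by auto
  qed
qed

lemma card_C4_le: assumes "finite S" shows "card (C4 p S) \<le> card S"
proof -
  have "card (C4 p S) \<le> card {B. \<exists>s\<in>S. B = orbit p s \<and> 4 dvd card B}"
    unfolding C4_def by (rule card_image_le) (rule finite_subset[of _ "(\<lambda>x. orbit p x) ` S"], auto simp: assms)
  also have "\<dots> \<le> card ((\<lambda>x. orbit p x) ` S)" by (rule card_mono) (auto simp: assms)
  also have "\<dots> \<le> card S" by (rule card_image_le[OF assms])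
  finally show ?thesis .
qed

lemma card_distinct_lists:
  assumes fin: "finite A"
  shows "real (card {Ts. length Ts = z \<and> distinct Ts \<and> set Ts \<subseteq> A}) =
         (if z \<le> card A then fact (card A) / fact (card A - z) else 0)"
proof (cases "z \<le> card A")
  case True
  let ?n = "card A"
  have "card {Ts. length Ts = z \<and> distinct Ts \<and> set Ts \<subseteq> A} = \<Prod>{?n - z + 1..?n}"
    by (rule card_lists_distinct_length_eq[OF fin True])
  also have "\<dots> = fact ?n div fact (?n - z)" using fact_div_fact[of "?n - z" ?n] by simp
  finally have "real (card {Ts. length Ts = z \<and> distinct Ts \<and> set Ts \<subseteq> A}) = real (fact ?n div fact (?n - z))" by simp
  also have "\<dots> = fact ?n / fact (?n - z)"
    by (subst real_of_nat_div) (auto intro: fact_dvd)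
  finally show ?thesis using True by simp
next
  case False
  have e: "{Ts. length Ts = z \<and> distinct Ts \<and> set Ts \<subseteq> A} = {}"
  proof (rule ccontr)
    assume "{Ts. length Ts = z \<and> distinct Ts \<and> set Ts \<subseteq> A} \<noteq> {}"
    then obtain Ts where "length Ts = z" "distinct Ts" "set Ts \<subseteq> A" by blast
    then have "z \<le> card A" using card_mono[OF fin] distinct_card by metis
    then show False using False by simp
  qed
  show ?thesis unfolding e using False by simp
qed

lemma binom_count:
  assumes fin: "finite A" and nN: "card A \<le> N"
  shows "(\<Sum>z=0..N. (2 ^ z / fact z * (-1) ^ z) * real (card {Ts. length Ts = z \<and> distinct Ts \<and> set Ts \<subseteq> A}))
     = (-1::real) ^ card A"
proof -
  let ?n = "card A"
  have trm: "(2 ^ z / fact z * (-1) ^ z) * real (card {Ts. length Ts = z \<and> distinct Ts \<and> set Ts \<subseteq> A})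
      = of_nat (?n choose z) * (-2::real) ^ z" for z
  proof (cases "z \<le> ?n")
    case True
    have "of_nat (?n choose z) = (fact ?n / (fact z * fact (?n - z)) :: real)" by (rule binomial_fact[OF True])
    then show ?thesis unfolding card_distinct_lists[OF fin] using True
      by (simp add: power_minus' field_simps)
  next
    case False
    then show ?thesis unfolding card_distinct_lists[OF fin] by simp
  qed
  have "(\<Sum>z=0..N. (2 ^ z / fact z * (-1) ^ z) * real (card {Ts. length Ts = z \<and> distinct Ts \<and> set Ts \<subseteq> A}))
      = (\<Sum>z=0..N. of_nat (?n choose z) * (-2::real) ^ z)" using trm by simp
  also have "\<dots> = (\<Sum>z=0..?n. of_nat (?n choose z) * (-2::real) ^ z)"
    by (rule sum.mono_neutral_right) (use nN in auto)
  also have "\<dots> = (\<Sum>z\<le>?n. of_nat (?n choose z) * (-2::real) ^ z * 1 ^ (?n - z))"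
    by (simp add: atLeast0AtMost)
  also have "\<dots> = (-2 + 1) ^ ?n" by (rule binomial_ring[symmetric])
  finally show ?thesis by simp
qed

lemma finite_D: assumes fin: "finite S" shows "finite (disjoint_4k_tuples S E z)"
proof -
  have "disjoint_4k_tuples S E z \<subseteq> {Ts. set Ts \<subseteq> Pow (Pow S) \<and> length Ts = z}"
  proof
    fix Ts assume T: "Ts \<in> disjoint_4k_tuples S E z"
    have "\<forall>c\<in>set Ts. c \<subseteq> Pow S"
    proof
      fix c assume "c \<in> set Ts"
      then have "cycle4k_in S E c" using T unfolding disjoint_4k_tuples_def by auto
      then have "\<Union>c \<subseteq> S" by (rule cycle4k_facts(1))
      then show "c \<subseteq> Pow S" by blast
    qed
    then show "Ts \<in> {Ts. set Ts \<subseteq> Pow (Pow S) \<and> length Ts = z}" using T unfolding disjoint_4k_tuples_def by auto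
  qed
  moreover have "finite {Ts. set Ts \<subseteq> Pow (Pow S) \<and> length Ts = z}"
    by (rule finite_lists_length_eq) (simp add: fin)
  ultimately show ?thesis by (rule finite_subset)
qed

lemma sumq:
  assumes bip: "\<forall>u v. E u v \<longrightarrow> (u \<in> X \<longleftrightarrow> v \<notin> X)" and fin: "finite S"
  shows "(\<Sum>q\<in>PM E S. (-1::real) ^ card (C4 q S)) = (-1) ^ (card S div 2) * det_on E S"
proof -
  have "(\<Sum>q\<in>PM E S. (-1::real) ^ card (C4 q S)) = (\<Sum>q\<in>PM E S. (-1) ^ (card S div 2) * real_of_int (sign q))"
  proof (rule sum.cong[OF refl])
    fix q assume "q \<in> PM E S"
    then have "real_of_int (sign q) = (-1) ^ (card S div 2 + card (C4 q S))" using signA[OF bip fin] by blast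
    then have "(-1) ^ (card S div 2) * real_of_int (sign q) = (-1) ^ (card S div 2) * (-1) ^ (card S div 2) * (-1) ^ card (C4 q S)"
      by (simp add: power_add)
    also have "\<dots> = (-1) ^ card (C4 q S)" by (simp add: power_add[symmetric])
    finally show "(-1::real) ^ card (C4 q S) = (-1) ^ (card S div 2) * real_of_int (sign q)" by simp
  qed
  also have "\<dots> = (-1) ^ (card S div 2) * det_on E S" by (simp add: det_PM[OF fin] sum_distrib_left)
  finally show ?thesis .
qed

lemma neg1_div2: assumes "4 dvd t" "t \<le> c" shows "(-1::real) ^ ((c - t) div 2) = (-1) ^ (c div 2)"
proof -
  obtain j where j: "t = 4 * j" using assms(1) by blast
  have "c div 2 = (c - t) div 2 + 2 * j" using j assms(2) by linarith
  then show ?thesis by (simp add: power_add power_mult)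
qed

lemma full:
  assumes sym: "\<forall>u v. E u v \<longrightarrow> E v u" and bip: "\<forall>u v. E u v \<longrightarrow> (u \<in> X \<longleftrightarrow> v \<notin> X)"
    and fin: "finite S" and N: "card S \<le> N"
  shows "per_on E S = (-1) ^ (card S div 2) *
     (\<Sum>z=0..N. (4 ^ z / fact z) * (\<Sum>Ts\<in>disjoint_4k_tuples S E z. det_on E (S - tuple_vertices Ts)))"
proof -
  define D where "D z = disjoint_4k_tuples S E z" for z
  define cf where "cf z = (2 ^ z / fact z * (-1) ^ z :: real)" for z :: nat
  define f where "f p = (-1::real) ^ card (C4 p S)" for p
  define ind where "ind Ts p = (if set Ts \<subseteq> C4 p S then 1 else (0::real))" for Ts p
  have finD: "finite (D z)" for z unfolding D_def by (rule finite_D[OF fin])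
  have finP: "finite (PM E S)" by (rule finite_PM[OF fin])
  have one: "1 = (\<Sum>z=0..N. cf z * (f p * (\<Sum>Ts\<in>D z. ind Ts p)))" if p: "p \<in> PM E S" for p
  proof -
    have pS: "p permutes S" using p unfolding PM_def by auto
    have c: "(\<Sum>Ts\<in>D z. ind Ts p) = real (card {Ts. length Ts = z \<and> distinct Ts \<and> set Ts \<subseteq> C4 p S})" for z
    proof -
      have "(\<Sum>Ts\<in>D z. ind Ts p) = (\<Sum>Ts\<in>{Ts\<in>D z. set Ts \<subseteq> C4 p S}. 1)"
        unfolding ind_def by (rule sum.inter_filter[OF finD, symmetric])
      also have "\<dots> = real (card {Ts\<in>D z. set Ts \<subseteq> C4 p S})" by simp
      also have "{Ts\<in>D z. set Ts \<subseteq> C4 p S} = {Ts. length Ts = z \<and> distinct Ts \<and> set Ts \<subseteq> C4 p S}"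
        unfolding D_def by (rule count_set[OF p fin])
      finally show ?thesis .
    qed
    have le: "card (C4 p S) \<le> N" using card_C4_le[OF fin, of p] N by simp
    have "(\<Sum>z=0..N. cf z * (f p * (\<Sum>Ts\<in>D z. ind Ts p))) =
          f p * (\<Sum>z=0..N. cf z * real (card {Ts. length Ts = z \<and> distinct Ts \<and> set Ts \<subseteq> C4 p S}))"
      unfolding c by (simp add: sum_distrib_left mult_ac)
    also have "\<dots> = f p * (-1) ^ card (C4 p S)"
      unfolding cf_def by (subst binom_count[OF finite_C4[OF fin] le]) simp
    also have "\<dots> = 1" unfolding f_def by (simp add: power_add[symmetric])
    finally show ?thesis by simp
  qed
  have "per_on E S = (\<Sum>p\<in>PM E S. 1)" using per_PM[OF fin] by simp
  also have "\<dots> = (\<Sum>p\<in>PM E S. \<Sum>z=0..N. cf z * (f p * (\<Sum>Ts\<in>D z. ind Ts p)))"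
    using one by (intro sum.cong) auto
  also have "\<dots> = (\<Sum>z=0..N. \<Sum>p\<in>PM E S. cf z * (f p * (\<Sum>Ts\<in>D z. ind Ts p)))"
    by (rule sum.swap)
  also have "\<dots> = (\<Sum>z=0..N. cf z * (\<Sum>Ts\<in>D z. \<Sum>p\<in>PM E S. f p * ind Ts p))"
    by (simp add: sum_distrib_left sum.swap[of _ "PM E S"] mult_ac)
  also have "\<dots> = (\<Sum>z=0..N. cf z * (\<Sum>Ts\<in>D z. (-2) ^ z * ((-1) ^ (card S div 2) * det_on E (S - tuple_vertices Ts))))"
  proof (intro sum.cong refl arg_cong2[where f = "(*)"])
    fix z Ts assume Ts: "Ts \<in> D z"
    have T: "Ts \<in> disjoint_4k_tuples S E z" using Ts unfolding D_def .
    have lz: "length Ts = z" using T unfolding disjoint_4k_tuples_def by simp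
    have tv: "tuple_vertices Ts \<subseteq> S \<and> finite (tuple_vertices Ts) \<and> 4 dvd card (tuple_vertices Ts)"
      by (rule D_tv[OF T])
    have "(\<Sum>p\<in>PM E S. f p * ind Ts p) = (\<Sum>p\<in>{p\<in>PM E S. set Ts \<subseteq> C4 p S}. f p)"
      unfolding ind_def by (simp add: sum.inter_filter[OF finP] if_distrib cong: if_cong)
    also have "\<dots> = (-2) ^ z * (\<Sum>q\<in>PM E (S - tuple_vertices Ts). (-1) ^ card (C4 q (S - tuple_vertices Ts)))"
      unfolding f_def using B[OF sym fin T] lz by simp
    also have "\<dots> = (-2) ^ z * ((-1) ^ (card (S - tuple_vertices Ts) div 2) * det_on E (S - tuple_vertices Ts))"
      using sumq[OF bip, of "S - tuple_vertices Ts"] fin by simp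
    also have "card (S - tuple_vertices Ts) = card S - card (tuple_vertices Ts)"
      using tv by (simp add: card_Diff_subset)
    also have "(-1::real) ^ ((card S - card (tuple_vertices Ts)) div 2) = (-1) ^ (card S div 2)"
      by (rule neg1_div2) (use tv fin in \<open>auto intro: card_mono\<close>)
    finally show "(\<Sum>p\<in>PM E S. f p * ind Ts p) = (-2) ^ z * ((-1) ^ (card S div 2) * det_on E (S - tuple_vertices Ts))" .
  qed
  also have "\<dots> = (-1) ^ (card S div 2) * (\<Sum>z=0..N. (4 ^ z / fact z) * (\<Sum>Ts\<in>D z. det_on E (S - tuple_vertices Ts)))"
  proof -
    have "cf z * (-2) ^ z = 4 ^ z / fact z" for z
    proof -
      have a: "(-1::real) ^ z * (-2) ^ z = ((-1) * (-2)) ^ z" by (rule power_mult_distrib[symmetric])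
      have b: "(2::real) ^ z * 2 ^ z = (2 * 2) ^ z" by (rule power_mult_distrib[symmetric])
      have "cf z * (-2) ^ z = 2 ^ z * ((-1) ^ z * (-2) ^ z) / fact z" unfolding cf_def by simp
      also have "\<dots> = 4 ^ z / fact z" unfolding a using b by simp
      finally show ?thesis .
    qed
    note cz = this
    have "cf z * (\<Sum>Ts\<in>D z. (-2) ^ z * ((-1) ^ (card S div 2) * det_on E (S - tuple_vertices Ts))) =
       (-1) ^ (card S div 2) * ((4 ^ z / fact z) * (\<Sum>Ts\<in>D z. det_on E (S - tuple_vertices Ts)))" for z
    proof -
      have "cf z * (\<Sum>Ts\<in>D z. (-2) ^ z * ((-1) ^ (card S div 2) * det_on E (S - tuple_vertices Ts))) =
        (cf z * (-2) ^ z) * ((-1) ^ (card S div 2) * (\<Sum>Ts\<in>D z. det_on E (S - tuple_vertices Ts)))"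
        by (simp add: sum_distrib_left mult_ac)
      then show ?thesis unfolding cz by (simp add: mult_ac)
    qed
    then show ?thesis by (simp add: sum_distrib_left)
  qed
  finally show ?thesis unfolding D_def .
qed

lemma D_sub:
  assumes T: "Ts \<in> disjoint_4k_tuples T E z" and sub: "tuple_vertices Ts \<subseteq> S'"
  shows "Ts \<in> disjoint_4k_tuples S' E z"
proof -
  have "\<forall>C\<in>set Ts. cycle4k_in S' E C"
  proof
    fix C assume C: "C \<in> set Ts"
    then have "cycle4k_in T E C" using T unfolding disjoint_4k_tuples_def by auto
    moreover have "\<Union>C \<subseteq> S'" using C sub unfolding tuple_vertices_def cycle_vertices_def by auto
    ultimately show "cycle4k_in S' E C" by (rule cycle4k_mono)
  qed
  then show ?thesis using T unfolding disjoint_4k_tuples_def by auto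
qed

lemma D_take:
  assumes T: "Ts \<in> disjoint_4k_tuples S E z" and k: "k \<le> z"
  shows "take k Ts \<in> disjoint_4k_tuples S E k"
  using T k unfolding disjoint_4k_tuples_def by (auto dest: in_set_takeD)

lemma det_empty: "det_on E {} = 1"
  unfolding det_on_def by simp

theorem theorem2:
  fixes V :: "'a set" and E :: "'a \<Rightarrow> 'a \<Rightarrow> bool" and m :: nat
  assumes "simple_graph V E" and "bipartite V E"
  shows "(disjoint_4k_tuples V E (m + 1) = {}) \<longleftrightarrow>
    (\<forall>S. S \<subseteq> V \<and> even (card S) \<longrightarrow>
       per_on E S = (-1) ^ (card S div 2) *
         (\<Sum>z=0..m. (4 ^ z / fact z) *
            (\<Sum>Ts\<in>disjoint_4k_tuples S E z. det_on E (S - tuple_vertices Ts))))"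
proof -
  have finV: "finite V" and sym: "\<forall>u v. E u v \<longrightarrow> E v u" using assms(1) unfolding simple_graph_def by auto
  obtain X where bip: "\<forall>u v. E u v \<longrightarrow> (u \<in> X \<longleftrightarrow> v \<notin> X)" using assms(2) unfolding bipartite_def by blast
  define F where "F S z = (4 ^ z / fact z) * (\<Sum>Ts\<in>disjoint_4k_tuples S E z. det_on E (S - tuple_vertices Ts))"
    for S and z :: nat
  show ?thesis unfolding F_def[symmetric]
  proof
    assume h: "disjoint_4k_tuples V E (m + 1) = {}"
    show "\<forall>S. S \<subseteq> V \<and> even (card S) \<longrightarrow> per_on E S = (-1) ^ (card S div 2) * (\<Sum>z=0..m. F S z)"
    proof (intro allI impI)
      fix S assume S: "S \<subseteq> V \<and> even (card S)"
      have fin: "finite S" using S finV finite_subset by blast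
      define N where "N = max m (card S)"
      have "per_on E S = (-1) ^ (card S div 2) * (\<Sum>z=0..N. F S z)"
        unfolding F_def by (rule full[OF sym bip fin]) (simp add: N_def)
      also have "(\<Sum>z=0..N. F S z) = (\<Sum>z=0..m. F S z)"
      proof (rule sum.mono_neutral_right)
        show "finite {0..N}" by simp
        show "{0..m} \<subseteq> {0..N}" by (auto simp: N_def)
        show "\<forall>z\<in>{0..N} - {0..m}. F S z = 0"
        proof
          fix z assume z: "z \<in> {0..N} - {0..m}"
          have "disjoint_4k_tuples S E z = {}"
          proof (rule ccontr)
            assume "disjoint_4k_tuples S E z \<noteq> {}"
            then obtain Ts where Ts: "Ts \<in> disjoint_4k_tuples S E z" by blast
            have T1: "take (m + 1) Ts \<in> disjoint_4k_tuples S E (m + 1)" by (rule D_take[OF Ts]) (use z in auto)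
            have "tuple_vertices (take (m + 1) Ts) \<subseteq> V" using D_tv[OF T1] S by blast
            then have "take (m + 1) Ts \<in> disjoint_4k_tuples V E (m + 1)" by (rule D_sub[OF T1])
            then show False using h by simp
          qed
          then show "F S z = 0" unfolding F_def by simp
        qed
      qed
      finally show "per_on E S = (-1) ^ (card S div 2) * (\<Sum>z=0..m. F S z)" .
    qed
  next
    assume H: "\<forall>S. S \<subseteq> V \<and> even (card S) \<longrightarrow> per_on E S = (-1) ^ (card S div 2) * (\<Sum>z=0..m. F S z)"
    show "disjoint_4k_tuples V E (m + 1) = {}"
    proof (rule ccontr)
      assume "disjoint_4k_tuples V E (m + 1) \<noteq> {}"
      then obtain T where "T \<in> disjoint_4k_tuples V E (m + 1)" by blast
      then obtain T0 where T0: "T0 \<in> disjoint_4k_tuples V E (m + 1)"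
        and minT: "\<forall>y. y \<in> disjoint_4k_tuples V E (m + 1) \<longrightarrow> card (tuple_vertices T0) \<le> card (tuple_vertices y)"
        using ex_has_least_nat[of "\<lambda>T. T \<in> disjoint_4k_tuples V E (m + 1)" T "\<lambda>T. card (tuple_vertices T)"] by blast
      define S where "S = tuple_vertices T0"
      have Sp: "S \<subseteq> V" "finite S" "4 dvd card S" using D_tv[OF T0] unfolding S_def by auto
      have evS: "even (card S)" using Sp(3) by (metis dvd_trans even_numeral)
      have key: "z = m + 1 \<and> tuple_vertices Ts = S" if Ts: "Ts \<in> disjoint_4k_tuples S E z" and z: "m + 1 \<le> z" for Ts z
      proof -
        define T' where "T' = take (m + 1) Ts"
        have T1: "T' \<in> disjoint_4k_tuples S E (m + 1)" unfolding T'_def by (rule D_take[OF Ts z])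
        have tvS: "tuple_vertices T' \<subseteq> S" using D_tv[OF T1] by blast
        then have "tuple_vertices T' \<subseteq> V" using Sp by blast
        then have "T' \<in> disjoint_4k_tuples V E (m + 1)" by (rule D_sub[OF T1])
        then have "card S \<le> card (tuple_vertices T')" using minT unfolding S_def by blast
        then have tvE: "tuple_vertices T' = S" using card_seteq[OF Sp(2) tvS] by blast
        have lz: "length Ts = z" using Ts unfolding disjoint_4k_tuples_def by simp
        have "\<not> m + 1 < z"
        proof
          assume mz: "m + 1 < z"
          define c where "c = Ts ! (m + 1)"
          have cin: "c \<in> set Ts" unfolding c_def using mz lz by simp
          have cc: "cycle4k_in S E c" using Ts cin unfolding disjoint_4k_tuples_def by auto
          have disj: "\<Union>c \<inter> tuple_vertices T' = {}"
          proof -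
            have "\<Union>c \<inter> \<Union>a = {}" if a: "a \<in> set T'" for a
            proof -
              obtain i where i: "i < length T'" "a = T' ! i" using a by (auto simp: set_conv_nth)
              have im: "i < m + 1" using i(1) unfolding T'_def by simp
              have "a = Ts ! i" using i im unfolding T'_def by simp
              then show ?thesis using Ts im mz unfolding disjoint_4k_tuples_def cycle_vertices_def c_def by auto
            qed
            then show ?thesis unfolding tuple_vertices_def cycle_vertices_def by blast
          qed
          have "\<Union>c \<subseteq> S" "\<Union>c \<noteq> {}" using cycle4k_facts[OF cc] by auto
          then show False using disj tvE by blast
        qed
        then have zm: "z = m + 1" using z by simp
        then have "T' = Ts" unfolding T'_def using lz by simp
        then show ?thesis using zm tvE by simp
      qed
      define N where "N = max (m + 1) (card S)"
      have "per_on E S = (-1) ^ (card S div 2) * (\<Sum>z=0..N. F S z)"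
        unfolding F_def by (rule full[OF sym bip Sp(2)]) (simp add: N_def)
      also have "(\<Sum>z=0..N. F S z) = (\<Sum>z=0..m + 1. F S z)"
      proof (rule sum.mono_neutral_right)
        show "finite {0..N}" by simp
        show "{0..m + 1} \<subseteq> {0..N}" by (auto simp: N_def)
        show "\<forall>z\<in>{0..N} - {0..m + 1}. F S z = 0"
        proof
          fix z assume z: "z \<in> {0..N} - {0..m + 1}"
          have "disjoint_4k_tuples S E z = {}" using key z by fastforce
          then show "F S z = 0" unfolding F_def by simp
        qed
      qed
      also have "\<dots> = (\<Sum>z=0..m. F S z) + F S (m + 1)" by simp
      finally have eq1: "per_on E S = (-1) ^ (card S div 2) * ((\<Sum>z=0..m. F S z) + F S (m + 1))" .
      have eq2: "per_on E S = (-1) ^ (card S div 2) * (\<Sum>z=0..m. F S z)" using H Sp(1) evS by blast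
      have "(-1::real) ^ (card S div 2) * F S (m + 1) = 0" using eq1 eq2 by (simp add: distrib_left)
      then have F0: "F S (m + 1) = 0" by simp
      have "F S (m + 1) = (4 ^ (m + 1) / fact (m + 1)) * (\<Sum>Ts\<in>disjoint_4k_tuples S E (m + 1). 1)"
        unfolding F_def using key by (intro arg_cong2[where f = "(*)"] sum.cong refl) (simp add: det_empty)
      also have "\<dots> = (4 ^ (m + 1) / fact (m + 1)) * real (card (disjoint_4k_tuples S E (m + 1)))" by simp
      finally have F1: "F S (m + 1) = (4 ^ (m + 1) / fact (m + 1)) * real (card (disjoint_4k_tuples S E (m + 1)))" .
      have "T0 \<in> disjoint_4k_tuples S E (m + 1)" by (rule D_sub[OF T0]) (simp add: S_def)
      then have "card (disjoint_4k_tuples S E (m + 1)) > 0"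
        using finite_D[OF Sp(2)] card_gt_0_iff by blast
      then have "F S (m + 1) > 0" unfolding F1 by simp
      then show False using F0 by simp
    qed
  qed
qed


end
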